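(* Let $S^2_{\geq 0}=\{(x,y,z):x^2+y^2+z^2=1,\ z\geq 0\}$ and let $O=(0,0,0)$. If $A,B,C,D$ are four points on $S^2_{\geq 0}$ such that the sum $AB+AC+AD+BC+BD+CD$ of their pairwise Euclidean distances is maximal (among all quadruples of points of $S^2_{\geq 0}$), then $O$ is contained in the interior of the convex hull of $A,B,C,D$ or lies on one of its faces (surfaces). *)

theory Defs
  imports "HOL-Analysis.Analysis"
begin

definition upper_hemisphere :: "(real^3) set" where
  "upper_hemisphere = {p. (p$1)^2 + (p$2)^2 + (p$3)^2 = 1 \<and> p$3 \<ge> 0}"

definition pair_dist_sum :: "real^3 \<Rightarrow> real^3 \<Rightarrow> real^3 \<Rightarrow> real^3 \<Rightarrow> real" where
  "pair_dist_sum A B C D =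
     dist A B + dist A C + dist A D + dist B C + dist B D + dist C D"

end

theory Submission
  imports Defs
begin

lemma hemi_iff: "P \<in> upper_hemisphere \<longleftrightarrow> norm P = 1 \<and> P$3 \<ge> 0"
proof -
  have e1: "P \<bullet> P = (P$1)^2 + (P$2)^2 + (P$3)^2"
    by (simp add: inner_vec_def sum_3 power2_eq_square)
  have "norm P = 1 \<longleftrightarrow> (P$1)^2 + (P$2)^2 + (P$3)^2 = 1"
    unfolding norm_eq_sqrt_inner e1 by simp
  then show ?thesis unfolding upper_hemisphere_def by simp
qed

lemma inv_dist:
  fixes a b :: "'a::real_inner"
  assumes "a \<noteq> 0" "b \<noteq> 0"
  shows "norm (a /\<^sub>R (norm a)^2 - b /\<^sub>R (norm b)^2) = norm (a - b) / (norm a * norm b)"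
proof -
  have na: "a \<bullet> a > 0" "b \<bullet> b > 0" using assms by auto
  have "(norm (a /\<^sub>R (norm a)^2 - b /\<^sub>R (norm b)^2))^2 = (norm (a - b) / (norm a * norm b))^2"
    using na
    by (simp add: power2_norm_eq_inner inner_diff_left inner_diff_right power_divide
        power_mult_distrib inner_commute field_simps)
  then show ?thesis
    by (simp add: power2_eq_iff_nonneg)
qed

definition G :: "'a::real_inner \<Rightarrow> 'a \<Rightarrow> 'a" where
  "G X P = - X + (1 - (norm X)^2) *\<^sub>R ((P - X) /\<^sub>R (norm (P - X))^2)"

lemma G_dist:
  fixes X P Q :: "'a::real_inner"
  assumes "P \<noteq> X" "Q \<noteq> X"
  shows "dist (G X P) (G X Q) = \<bar>1 - (norm X)^2\<bar> * dist P Q / (norm (P - X) * norm (Q - X))"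
proof -
  have "G X P - G X Q = (1 - (norm X)^2) *\<^sub>R ((P - X) /\<^sub>R (norm (P - X))^2 - (Q - X) /\<^sub>R (norm (Q - X))^2)"
    unfolding G_def by (simp add: algebra_simps)
  then have "dist (G X P) (G X Q) = \<bar>1 - (norm X)^2\<bar> * norm ((P - X) /\<^sub>R (norm (P - X))^2 - (Q - X) /\<^sub>R (norm (Q - X))^2)"
    by (simp add: dist_norm)
  also have "\<dots> = \<bar>1 - (norm X)^2\<bar> * (norm (P - Q) / (norm (P - X) * norm (Q - X)))"
    using inv_dist[of "P - X" "Q - X"] assms by simp
  finally show ?thesis by (simp add: dist_norm)
qed

lemma G_norm:
  fixes X P :: "'a::real_inner"
  assumes "norm P = 1" "norm X < 1"
  shows "norm (G X P) = 1"
proof -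
  have PX: "P \<noteq> X" using assms by auto
  define s where "s = (P - X) \<bullet> (P - X)"
  have s: "s > 0" using PX s_def by auto
  have key: "s + 2 * (X \<bullet> (P - X)) = 1 - X \<bullet> X"
    using assms(1) unfolding s_def
    by (simp add: inner_diff_left inner_diff_right inner_commute norm_eq_sqrt_inner)
  define a where "a = P - X"
  define t where "t = (1 - X \<bullet> X) / s"
  have G: "G X P = - X + t *\<^sub>R a"
    unfolding G_def t_def s_def a_def by (simp add: power2_norm_eq_inner divide_inverse)
  have "(norm (G X P))^2 = X \<bullet> X - 2 * t * (X \<bullet> a) + t^2 * s"
  proof -
    have sa: "s = a \<bullet> a" using s_def a_def by simp
    show ?thesis unfolding G power2_norm_eq_inner sa
      by (simp add: inner_add_left inner_add_right inner_commute power2_eq_square algebra_simps)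
  qed
  also have "\<dots> = X \<bullet> X + (1 - X \<bullet> X) * (1 - X \<bullet> X - 2 * (X \<bullet> a)) / s"
    using s unfolding t_def by (simp add: field_simps power2_eq_square)
  also have "\<dots> = 1"
  proof -
    have h: "1 - X \<bullet> X - 2 * (X \<bullet> a) = s" using key unfolding a_def by linarith
    show ?thesis using s by (simp add: h)
  qed
  finally have "(norm (G X P))^2 = 1" .
  then have "norm (G X P) = 1 \<or> norm (G X P) = -1" by (simp add: power2_eq_1_iff)
  then show ?thesis using norm_ge_zero[of "G X P"] by linarith
qed

definition e3 :: "real^3" where "e3 = axis 3 1"

definition Hh :: "real^3 \<Rightarrow> real^3 \<Rightarrow> real^3" where
  "Hh u x = (if u = e3 then x else
     x - (2 * (x \<bullet> (u - e3)) / ((u - e3) \<bullet> (u - e3))) *\<^sub>R (u - e3))"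

lemma Hh_diff: "Hh u x - Hh u y = Hh u (x - y)"
proof (cases "u = e3")
  case True then show ?thesis by (simp add: Hh_def)
next
  case False
  define n where "n = u - e3"
  have H: "Hh u z = z - (2 * (z \<bullet> n) / (n \<bullet> n)) *\<^sub>R n" for z
    using False unfolding Hh_def n_def by simp
  have e: "2 * ((x - y) \<bullet> n) / (n \<bullet> n) = 2 * (x \<bullet> n) / (n \<bullet> n) - 2 * (y \<bullet> n) / (n \<bullet> n)"
    by (simp add: inner_diff_left diff_divide_distrib algebra_simps)
  show ?thesis unfolding H e by (simp add: scaleR_diff_left algebra_simps)
qed

lemma Hh_norm: "norm (Hh u x) = norm x"
proof (cases "u = e3")
  case True then show ?thesis by (simp add: Hh_def)
next
  case False
  define n where "n = u - e3"
  have nn: "n \<bullet> n > 0" using False n_def by auto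
  define c where "c = 2 * (x \<bullet> n) / (n \<bullet> n)"
  have H: "Hh u x = x - c *\<^sub>R n" using False unfolding Hh_def c_def n_def by simp
  have "(norm (Hh u x))^2 = x \<bullet> x - 2 * c * (x \<bullet> n) + c * c * (n \<bullet> n)"
    unfolding H power2_norm_eq_inner
    by (simp add: inner_diff_left inner_diff_right inner_commute algebra_simps)
  also have "\<dots> = x \<bullet> x" using nn unfolding c_def by (simp add: field_simps)
  finally have "(norm (Hh u x))^2 = (norm x)^2" by (simp add: power2_norm_eq_inner)
  then show ?thesis by (simp add: power2_eq_iff_nonneg)
qed

lemma Hh_3:
  assumes "norm u = 1"
  shows "(Hh u x)$3 = x \<bullet> u"
proof (cases "u = e3")
  case True then show ?thesis by (simp add: Hh_def e3_def inner_axis)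
next
  case False
  define n where "n = u - e3"
  have nn: "n \<bullet> n > 0" using False n_def by auto
  have uu: "u \<bullet> u = 1" using assms by (simp add: norm_eq_1)
  have nn2: "n \<bullet> n = 2 - 2 * u$3"
    unfolding n_def using uu
    by (simp add: inner_diff_left inner_diff_right inner_commute e3_def inner_axis)
  have n3: "n$3 = u$3 - 1" by (simp add: n_def e3_def)
  have xn: "x \<bullet> n = x \<bullet> u - x$3" by (simp add: n_def e3_def inner_diff_right inner_axis)
  have ne: "u$3 \<noteq> 1" using nn nn2 by auto
  have "(Hh u x)$3 = x$3 - (2 * (x \<bullet> n) / (n \<bullet> n)) * n$3"
    using False unfolding Hh_def n_def by simp
  also have "\<dots> = x \<bullet> u" unfolding nn2 n3 xn using ne
    by (simp add: field_simps)
  finally show ?thesis .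
qed

lemma arith1:
  fixes c w :: real
  assumes "0 < c" "c \<le> 1/2" "4 * c \<le> w"
  shows "c * (1 - 2 * c * w + c^2) \<le> (1 - c^2) * (w - c)"
proof -
  have w0: "w \<ge> 0" using assms by linarith
  have cc: "c * c \<le> 1/4" using assms mult_mono[of c "1/2" c "1/2"] by simp
  have "c * (1 - 2 * c * w + c^2) \<le> c * (1 + c^2)"
    using assms w0 by (simp add: mult_left_mono)
  also have "\<dots> = c + c * (c * c)" by (simp add: power2_eq_square algebra_simps)
  also have "\<dots> \<le> c + c * (1/4)" using cc assms by (simp add: mult_left_mono)
  also have "\<dots> \<le> (3/4) * (3 * c)" using assms by simp
  also have "\<dots> \<le> (1 - c^2) * (w - c)"
    using cc assms by (intro mult_mono) (auto simp: power2_eq_square)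
  finally show ?thesis .
qed

lemma pt_ok:
  fixes u P :: "real^3"
  assumes nu: "norm u = 1" and P: "P \<in> upper_hemisphere" and c: "0 < c" "c \<le> 1/2"
    and w: "4 * c \<le> u \<bullet> P"
  shows "Hh u (G (c *\<^sub>R u) P) \<in> upper_hemisphere"
    and "(norm (P - c *\<^sub>R u))^2 < 1 - c^2"
    and "P \<noteq> c *\<^sub>R u"
proof -
  have nP: "norm P = 1" using P hemi_iff by auto
  have uu: "u \<bullet> u = 1" using nu by (simp add: norm_eq_1)
  have PP: "P \<bullet> P = 1" using nP by (simp add: norm_eq_1)
  have nX: "norm (c *\<^sub>R u) = c" using nu c by simp
  define wP where "wP = u \<bullet> P"
  have s: "(norm (P - c *\<^sub>R u))^2 = 1 - 2 * c * wP + c^2"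
    unfolding power2_norm_eq_inner wP_def using uu PP
    by (simp add: inner_diff_left inner_diff_right inner_commute power2_eq_square algebra_simps)
  have "c * c < c * wP" using c w wP_def by (intro mult_strict_left_mono) auto
  then show s2: "(norm (P - c *\<^sub>R u))^2 < 1 - c^2" unfolding s by (simp add: power2_eq_square)
  show PX: "P \<noteq> c *\<^sub>R u" using nP nX c by auto
  have spos: "1 - 2 * c * wP + c^2 > 0" using PX s
    by (metis norm_eq_zero right_minus_eq zero_less_power2)
  have gn: "norm (G (c *\<^sub>R u) P) = 1" using G_norm[OF nP] nX c by simp
  have "G (c *\<^sub>R u) P \<bullet> u = - c + (1 - c^2) * (wP - c) / (1 - 2 * c * wP + c^2)"
    unfolding G_def s nX using uu
    by (simp add: inner_add_left inner_diff_left inner_commute wP_def divide_inverse algebra_simps)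
  also have "\<dots> \<ge> 0"
    using arith1[OF c w[folded wP_def]] spos by (simp add: field_simps)
  finally have "G (c *\<^sub>R u) P \<bullet> u \<ge> 0" .
  then show "Hh u (G (c *\<^sub>R u) P) \<in> upper_hemisphere"
    unfolding hemi_iff Hh_3[OF nu] Hh_norm using gn by simp
qed

lemma pair_ge:
  fixes u P Q :: "real^3"
  assumes nu: "norm u = 1" and P: "P \<in> upper_hemisphere" and Q: "Q \<in> upper_hemisphere"
    and c: "0 < c" "c \<le> 1/2"
    and wP: "4 * c \<le> u \<bullet> P" and wQ: "4 * c \<le> u \<bullet> Q"
  shows "dist P Q \<le> dist (Hh u (G (c *\<^sub>R u) P)) (Hh u (G (c *\<^sub>R u) Q))"
    and "P \<noteq> Q \<Longrightarrow> dist P Q < dist (Hh u (G (c *\<^sub>R u) P)) (Hh u (G (c *\<^sub>R u) Q))"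
proof -
  define X where "X = c *\<^sub>R u"
  define k where "k = 1 - c^2"
  have "c * c \<le> 1/2 * (1/2)" using c by (intro mult_mono) auto
  then have k: "k > 0" unfolding k_def by (simp add: power2_eq_square)
  have nX: "norm X = c" using nu c X_def by simp
  note p = pt_ok[OF nu P c wP, folded X_def k_def]
  note q = pt_ok[OF nu Q c wQ, folded X_def k_def]
  define a where "a = norm (P - X)"
  define b where "b = norm (Q - X)"
  have a: "a > 0" "a^2 < k" using p a_def by auto
  have b: "b > 0" "b^2 < k" using q b_def by auto
  have "(a * b)^2 = (a * a) * (b * b)" by (simp add: power2_eq_square algebra_simps)
  also have "\<dots> < k * k" using a b k by (intro mult_strict_mono) (auto simp: power2_eq_square)
  also have "\<dots> = k^2" by (simp add: power2_eq_square)
  finally have "(a * b)^2 < k^2" .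
  then have ab: "a * b < k" using k by (simp add: power_less_imp_less_base)
  have d: "dist (Hh u (G X P)) (Hh u (G X Q)) = k / (a * b) * dist P Q"
    unfolding dist_norm Hh_diff Hh_norm
    using G_dist[OF p(3) q(3)] nX k unfolding dist_norm a_def b_def k_def by simp
  have r: "k / (a * b) > 1" using ab a b by simp
  have "1 * dist P Q \<le> k / (a * b) * dist P Q" using r by (intro mult_right_mono) auto
  then have "dist P Q \<le> k / (a * b) * dist P Q" by simp
  then show "dist P Q \<le> dist (Hh u (G (c *\<^sub>R u) P)) (Hh u (G (c *\<^sub>R u) Q))"
    using d X_def by simp
  assume "P \<noteq> Q"
  then have "dist P Q > 0" by simp
  then have "1 * dist P Q < k / (a * b) * dist P Q" using r by (intro mult_strict_right_mono) auto
  then have "dist P Q < k / (a * b) * dist P Q" by simp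
  then show "dist P Q < dist (Hh u (G (c *\<^sub>R u) P)) (Hh u (G (c *\<^sub>R u) Q))"
    using d X_def by simp
qed

theorem lemma1:
  fixes A B C D :: "real^3"
  assumes "A \<in> upper_hemisphere" "B \<in> upper_hemisphere"
          "C \<in> upper_hemisphere" "D \<in> upper_hemisphere"
  assumes max: "\<And>A' B' C' D'. A' \<in> upper_hemisphere \<Longrightarrow> B' \<in> upper_hemisphere \<Longrightarrow>
          C' \<in> upper_hemisphere \<Longrightarrow> D' \<in> upper_hemisphere \<Longrightarrow>
          pair_dist_sum A' B' C' D' \<le> pair_dist_sum A B C D"
  shows "0 \<in> interior (convex hull {A, B, C, D}) \<or> 0 \<in> frontier (convex hull {A, B, C, D})"
proof -
  let ?S = "{A, B, C, D}"
  have cl: "closed (convex hull ?S)"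
    by (intro compact_imp_closed finite_imp_compact_convex_hull) simp
  have hull0: "0 \<in> convex hull ?S"
  proof (rule ccontr)
    assume n0: "0 \<notin> convex hull ?S"
    obtain a b where a: "a \<noteq> 0" "0 < b" "\<forall>x\<in>convex hull ?S. inner a x > b"
      using separating_hyperplane_closed_0[OF convex_convex_hull cl n0] by blast
    define u where "u = a /\<^sub>R norm a"
    have nu: "norm u = 1" using a(1) u_def by simp
    have pos: "u \<bullet> x > 0" if "x \<in> ?S" for x
    proof -
      have "x \<in> convex hull ?S" using that by (rule hull_inc)
      then have "a \<bullet> x > 0" using a by fastforce
      then show ?thesis using a(1) unfolding u_def by simp
    qed
    define c where "c = min (1/2) (min (min (u \<bullet> A) (u \<bullet> B)) (min (u \<bullet> C) (u \<bullet> D)) / 4)"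
    have c: "0 < c" "c \<le> 1/2" unfolding c_def using pos by auto
    have wA: "4 * c \<le> u \<bullet> A" and wB: "4 * c \<le> u \<bullet> B"
      and wC: "4 * c \<le> u \<bullet> C" and wD: "4 * c \<le> u \<bullet> D"
      unfolding c_def by auto
    define F where "F P = Hh u (G (c *\<^sub>R u) P)" for P
    note ok = pt_ok(1)[OF nu _ c, folded F_def]
    have hF: "F A \<in> upper_hemisphere" "F B \<in> upper_hemisphere"
      "F C \<in> upper_hemisphere" "F D \<in> upper_hemisphere"
      using ok assms(1-4) wA wB wC wD by auto
    note pg1 = pair_ge(1)[OF nu _ _ c, folded F_def]
    note pg2 = pair_ge(2)[OF nu _ _ c, folded F_def]
    have d1: "dist A B \<le> dist (F A) (F B)" "dist A C \<le> dist (F A) (F C)"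
      "dist A D \<le> dist (F A) (F D)" "dist B C \<le> dist (F B) (F C)"
      "dist B D \<le> dist (F B) (F D)" "dist C D \<le> dist (F C) (F D)"
      using pg1 assms(1-4) wA wB wC wD by auto
    have d2: "A \<noteq> B \<Longrightarrow> dist A B < dist (F A) (F B)" "A \<noteq> C \<Longrightarrow> dist A C < dist (F A) (F C)"
      "A \<noteq> D \<Longrightarrow> dist A D < dist (F A) (F D)" "B \<noteq> C \<Longrightarrow> dist B C < dist (F B) (F C)"
      "B \<noteq> D \<Longrightarrow> dist B D < dist (F B) (F D)" "C \<noteq> D \<Longrightarrow> dist C D < dist (F C) (F D)"
      using pg2 assms(1-4) wA wB wC wD by auto
    show False
    proof (cases "A = B \<and> A = C \<and> A = D")
      case True
      then have z: "pair_dist_sum A B C D = 0" unfolding pair_dist_sum_def by (elim conjE) simp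
      define E where "E = (axis 1 1 :: real^3)"
      have E3: "E $ 3 = 0" unfolding E_def axis_def by (simp add: vec_lambda_beta)
      have hE: "E \<in> upper_hemisphere" "- E \<in> upper_hemisphere"
        unfolding hemi_iff using E3 by (auto simp: E_def)
      have nE: "norm E = 1" by (simp add: E_def)
      have h: "E - (- E) = 2 *\<^sub>R E" by (simp add: scaleR_2)
      have dE1: "dist E (- E) = 2" unfolding dist_norm h using nE by simp
      have dE: "dist E (- E) = 2" "dist (- E) E = 2" using dE1 by (simp_all add: dist_commute)
      have "pair_dist_sum E (- E) E (- E) = 8"
        unfolding pair_dist_sum_def using dE by simp
      then show False using max[OF hE(1) hE(2) hE(1) hE(2)] z by simp
    next
      case False
      then have "A \<noteq> B \<or> A \<noteq> C \<or> A \<noteq> D" by blast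
      then have "pair_dist_sum A B C D < pair_dist_sum (F A) (F B) (F C) (F D)"
      proof (elim disjE)
        assume "A \<noteq> B" then show ?thesis
          unfolding pair_dist_sum_def using d1 d2(1) by linarith
      next
        assume "A \<noteq> C" then show ?thesis
          unfolding pair_dist_sum_def using d1 d2(2) by linarith
      next
        assume "A \<noteq> D" then show ?thesis
          unfolding pair_dist_sum_def using d1 d2(3) by linarith
      qed
      then show False using max[OF hF] by simp
    qed
  qed
  show ?thesis using hull0 cl by (auto simp: frontier_def closure_closed)
qed

end
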